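(* In the setting described in the context (with $L=[0,1]$), let $q\in\{1,\dots,n\}$ and assume there exists $A\subseteq\mathcal C$ with $|A|=q$ and $\eta_q(A)=1$. Then $$\min_{\mu\ q\text{-maxitive capacity}}\ \max_{1\le k\le N}|S_\mu(x^{(k)})-\alpha^{(k)}|=\Delta_q,$$ where the minimum is over all $q$-maxitive capacities $\mu:2^{\mathcal C}\to[0,1]$ (and is attained).
   Context: Let $\mathcal C=\{1,\dots,n\}$ and $L=[0,1]$. A capacity is a map $\mu:2^{\mathcal C}\to[0,1]$ with $\mu(\emptyset)=0$, $\mu(\mathcal C)=1$, monotone for inclusion; it is $q$-maxitive if for all $X$ with $|X|>q$, $\mu(X)=\max_{Y\subsetneq X,\ |Y|\le q}\mu(Y)$. Sugeno integral: $S_\mu(x)=\max_{A\subseteq\mathcal C}\min(\min_{i\in A}x_i,\mu(A))$ with $\min_{i\in\emptyset}x_i=1$. Training data: $N$ pairs $(x^{(k)},\alpha^{(k)})$, $x^{(k)}\in[0,1]^n$, $\alpha^{(k)}\in[0,1]$. For nonempty $A$, $m_{k,A}=\min_{i\in A}x^{(k)}_i$. Write $t^+=\max(t,0)$. For $1\le i\le N$ and $0<|A|\le q$, let $\sigma_G(\alpha^{(i)},m_{l,A},\alpha^{(l)})=\min\big(\tfrac{(\alpha^{(i)}-\alpha^{(l)})^+}{2},(m_{l,A}-\alpha^{(l)})^+\big)$, $\delta_{i,A}=\max\big((\alpha^{(i)}-m_{i,A})^+,\max_{1\le l\le N}\sigma_G(\alpha^{(i)},m_{l,A},\alpha^{(l)})\big)$,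 $\delta_i=\min_{0<|A|\le q}\delta_{i,A}$, and $\Delta_q=\max_{1\le i\le N}\delta_i$. For $0<|A|\le q$, $\eta_q(A)=\min_{1\le k\le N}\big(m_{k,A}\to_G\min(\alpha^{(k)}+\Delta_q,1)\big)$, where $a\to_G b=1$ if $a\le b$ and $a\to_G b=b$ otherwise. *)

theory Defs
  imports Complex_Main
begin

text \<open>Criteria are C = {1..n}; subsets of criteria are nat sets contained in {1..n}.
  Training data: x k i (k in {1..N}, i in {1..n}) and alpha k (k in {1..N}).\<close>

definition is_capacity :: "nat \<Rightarrow> (nat set \<Rightarrow> real) \<Rightarrow> bool" where
  "is_capacity n \<mu> \<longleftrightarrow>
     (\<forall>A. A \<subseteq> {1..n} \<longrightarrow> 0 \<le> \<mu> A \<and> \<mu> A \<le> 1) \<and>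
     \<mu> {} = 0 \<and> \<mu> {1..n} = 1 \<and>
     (\<forall>A B. A \<subseteq> B \<and> B \<subseteq> {1..n} \<longrightarrow> \<mu> A \<le> \<mu> B)"

definition q_maxitive :: "nat \<Rightarrow> nat \<Rightarrow> (nat set \<Rightarrow> real) \<Rightarrow> bool" where
  "q_maxitive n q \<mu> \<longleftrightarrow>
     (\<forall>X. X \<subseteq> {1..n} \<and> card X > q \<longrightarrow>
        \<mu> X = Max {\<mu> Y | Y. Y \<subset> X \<and> card Y \<le> q})"

definition q_maxitive_capacity :: "nat \<Rightarrow> nat \<Rightarrow> (nat set \<Rightarrow> real) \<Rightarrow> bool" where
  "q_maxitive_capacity n q \<mu> \<longleftrightarrow> is_capacity n \<mu> \<and> q_maxitive n q \<mu>"

definition minx :: "(nat \<Rightarrow> real) \<Rightarrow> nat set \<Rightarrow> real" where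
  "minx z A = (if A = {} then 1 else Min (z ` A))"

definition sugeno :: "nat \<Rightarrow> (nat set \<Rightarrow> real) \<Rightarrow> (nat \<Rightarrow> real) \<Rightarrow> real" where
  "sugeno n \<mu> z = Max {min (minx z A) (\<mu> A) | A. A \<subseteq> {1..n}}"

definition max_error ::
  "nat \<Rightarrow> nat \<Rightarrow> (nat \<Rightarrow> nat \<Rightarrow> real) \<Rightarrow> (nat \<Rightarrow> real) \<Rightarrow> (nat set \<Rightarrow> real) \<Rightarrow> real" where
  "max_error n N x \<alpha> \<mu> = Max {\<bar>sugeno n \<mu> (x k) - \<alpha> k\<bar> | k. k \<in> {1..N}}"

definition pos :: "real \<Rightarrow> real" where
  "pos t = max t 0"

definition godel_imp :: "real \<Rightarrow> real \<Rightarrow> real" where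
  "godel_imp a b = (if a \<le> b then 1 else b)"

definition small_sets :: "nat \<Rightarrow> nat \<Rightarrow> nat set set" where
  "small_sets n q = {A. A \<subseteq> {1..n} \<and> 0 < card A \<and> card A \<le> q}"

definition sigma_G :: "real \<Rightarrow> real \<Rightarrow> real \<Rightarrow> real" where
  "sigma_G ai m al = min (pos (ai - al) / 2) (pos (m - al))"

definition delta_iA ::
  "nat \<Rightarrow> (nat \<Rightarrow> nat \<Rightarrow> real) \<Rightarrow> (nat \<Rightarrow> real) \<Rightarrow> nat \<Rightarrow> nat set \<Rightarrow> real" where
  "delta_iA N x \<alpha> i A =
     max (pos (\<alpha> i - Min (x i ` A)))
         (Max {sigma_G (\<alpha> i) (Min (x l ` A)) (\<alpha> l) | l. l \<in> {1..N}})"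

definition delta_i ::
  "nat \<Rightarrow> nat \<Rightarrow> nat \<Rightarrow> (nat \<Rightarrow> nat \<Rightarrow> real) \<Rightarrow> (nat \<Rightarrow> real) \<Rightarrow> nat \<Rightarrow> real" where
  "delta_i n q N x \<alpha> i = Min {delta_iA N x \<alpha> i A | A. A \<in> small_sets n q}"

definition Delta ::
  "nat \<Rightarrow> nat \<Rightarrow> nat \<Rightarrow> (nat \<Rightarrow> nat \<Rightarrow> real) \<Rightarrow> (nat \<Rightarrow> real) \<Rightarrow> real" where
  "Delta n q N x \<alpha> = Max {delta_i n q N x \<alpha> i | i. i \<in> {1..N}}"

definition eta ::
  "nat \<Rightarrow> nat \<Rightarrow> nat \<Rightarrow> (nat \<Rightarrow> nat \<Rightarrow> real) \<Rightarrow> (nat \<Rightarrow> real) \<Rightarrow> nat set \<Rightarrow> real" where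
  "eta n q N x \<alpha> A =
     Min {godel_imp (Min (x k ` A)) (min (\<alpha> k + Delta n q N x \<alpha>) 1) | k. k \<in> {1..N}}"

end

theory Submission
  imports Defs
begin

lemma sugeno_img: "{min (minx z A) (\<mu> A) | A. A \<subseteq> {1..n}} = (\<lambda>A. min (minx z A) (\<mu> A)) ` Pow {1..n}"
  by auto

lemma sugeno_ge: "A \<subseteq> {1..n} \<Longrightarrow> min (minx z A) (\<mu> A) \<le> sugeno n \<mu> z"
  unfolding sugeno_def sugeno_img by (rule Max_ge) auto

lemma sugeno_att: "\<exists>A. A \<subseteq> {1..n} \<and> sugeno n \<mu> z = min (minx z A) (\<mu> A)"
proof -
  have "sugeno n \<mu> z \<in> (\<lambda>A. min (minx z A) (\<mu> A)) ` Pow {1..n}"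
    unfolding sugeno_def sugeno_img by (rule Max_in) auto
  then show ?thesis by auto
qed

lemma small_sets_fin: "finite (small_sets n q)"
  by (rule finite_subset[of _ "Pow {1..n}"]) (auto simp: small_sets_def)

lemma small_sets_ne: "q \<in> {1..n} \<Longrightarrow> {1} \<in> small_sets n q"
  by (auto simp: small_sets_def)

lemma sugeno_small:
  assumes qm: "q_maxitive n q \<mu>" and e: "\<mu> {} = 0"
  shows "\<exists>A. (A = {} \<or> A \<in> small_sets n q) \<and> sugeno n \<mu> z = min (minx z A) (\<mu> A)"
proof -
  obtain A where A: "A \<subseteq> {1..n}" "sugeno n \<mu> z = min (minx z A) (\<mu> A)"
    using sugeno_att by blast
  have finA: "finite A" using A(1) finite_subset by blast
  show ?thesis
  proof (cases "card A \<le> q")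
    case True
    then show ?thesis using A finA by (cases "A = {}") (auto simp: small_sets_def card_gt_0_iff)
  next
    case False
    let ?S = "{\<mu> Y | Y. Y \<subset> A \<and> card Y \<le> q}"
    have mA: "\<mu> A = Max ?S" using qm A(1) False unfolding q_maxitive_def by auto
    have "?S \<subseteq> \<mu> ` Pow A" by blast
    moreover have "finite (\<mu> ` Pow A)" using finA by simp
    ultimately have finS: "finite ?S" by (rule finite_subset)
    have "A \<noteq> {}" using False by auto
    then have "\<mu> {} \<in> ?S" by (intro CollectI exI[of _ "{}"]) auto
    then have "?S \<noteq> {}" by blast
    then have "Max ?S \<in> ?S" using finS by (rule Max_in[rotated])
    then obtain Y where Y: "Y \<subset> A" "card Y \<le> q" "\<mu> A = \<mu> Y" using mA by auto
    have finY: "finite Y" using Y(1) finA by (meson finite_subset psubset_imp_subset)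
    show ?thesis
    proof (cases "Y = {}")
      case True
      have "sugeno n \<mu> z \<le> 0" using A(2) Y(3) True e by simp
      moreover have "min (minx z {}) (\<mu> {}) \<le> sugeno n \<mu> z" by (rule sugeno_ge) auto
      ultimately show ?thesis using e by (intro exI[of _ "{}"]) (auto simp: minx_def)
    next
      case False
      have "minx z A \<le> minx z Y" unfolding minx_def using False Y(1) finA
        by (auto intro!: Min_antimono)
      then have "sugeno n \<mu> z \<le> min (minx z Y) (\<mu> Y)" using A(2) Y(3) by linarith
      moreover have "min (minx z Y) (\<mu> Y) \<le> sugeno n \<mu> z"
        by (rule sugeno_ge) (use Y(1) A(1) in auto)
      moreover have "Y \<in> small_sets n q" using False Y finY A(1)
        by (auto simp: small_sets_def card_gt_0_iff)
      ultimately show ?thesis by (intro exI[of _ Y]) auto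
    qed
  qed
qed

lemma img_eq: "{f l | l. l \<in> S} = f ` S" by auto

locale setting =
  fixes n N q :: nat and x :: "nat \<Rightarrow> nat \<Rightarrow> real" and \<alpha> :: "nat \<Rightarrow> real"
  assumes N1: "N \<ge> 1"
    and xb: "\<And>k i. k \<in> {1..N} \<Longrightarrow> i \<in> {1..n} \<Longrightarrow> 0 \<le> x k i \<and> x k i \<le> 1"
    and ab: "\<And>k. k \<in> {1..N} \<Longrightarrow> 0 \<le> \<alpha> k \<and> \<alpha> k \<le> 1"
    and qn: "q \<in> {1..n}"
begin

abbreviation "D \<equiv> Delta n q N x \<alpha>"

lemma delta_iA_ge: "l \<in> {1..N} \<Longrightarrow> sigma_G (\<alpha> i) (Min (x l ` A)) (\<alpha> l) \<le> delta_iA N x \<alpha> i A"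
  unfolding delta_iA_def img_eq
  by (rule order.trans[OF _ max.cobounded2], rule Max_ge) auto

lemma delta_iA_ge2: "pos (\<alpha> i - Min (x i ` A)) \<le> delta_iA N x \<alpha> i A"
  unfolding delta_iA_def by simp

lemma delta_iA_nn: "0 \<le> delta_iA N x \<alpha> i A"
  by (rule order.trans[OF _ delta_iA_ge2]) (simp add: pos_def)

lemma delta_i_att: "\<exists>A \<in> small_sets n q. delta_i n q N x \<alpha> i = delta_iA N x \<alpha> i A"
proof -
  have "delta_i n q N x \<alpha> i \<in> (\<lambda>A. delta_iA N x \<alpha> i A) ` small_sets n q"
    unfolding delta_i_def img_eq using small_sets_fin small_sets_ne[OF qn] by (intro Min_in) auto
  then show ?thesis by auto
qed

lemma delta_i_le: "A \<in> small_sets n q \<Longrightarrow> delta_i n q N x \<alpha> i \<le> delta_iA N x \<alpha> i A"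
  unfolding delta_i_def img_eq using small_sets_fin by (intro Min_le) auto

lemma D_ge: "i \<in> {1..N} \<Longrightarrow> delta_i n q N x \<alpha> i \<le> D"
  unfolding Delta_def img_eq by (intro Max_ge) auto

lemma D_att: "\<exists>i \<in> {1..N}. D = delta_i n q N x \<alpha> i"
proof -
  have "D \<in> (\<lambda>i. delta_i n q N x \<alpha> i) ` {1..N}"
    unfolding Delta_def img_eq using N1 by (intro Max_in) auto
  then show ?thesis by auto
qed

lemma D_nn: "0 \<le> D"
proof -
  obtain A where "A \<in> small_sets n q" "delta_i n q N x \<alpha> 1 = delta_iA N x \<alpha> 1 A"
    using delta_i_att by blast
  then have "0 \<le> delta_i n q N x \<alpha> 1" using delta_iA_nn by simp
  also have "\<dots> \<le> D" using N1 by (intro D_ge) auto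
  finally show ?thesis .
qed

lemma err_ge: "k \<in> {1..N} \<Longrightarrow> \<bar>sugeno n \<mu> (x k) - \<alpha> k\<bar> \<le> max_error n N x \<alpha> \<mu>"
  unfolding max_error_def img_eq by (intro Max_ge) auto

lemma err_le: "(\<And>k. k \<in> {1..N} \<Longrightarrow> \<bar>sugeno n \<mu> (x k) - \<alpha> k\<bar> \<le> t) \<Longrightarrow> max_error n N x \<alpha> \<mu> \<le> t"
  unfolding max_error_def img_eq using N1 by (subst Max_le_iff) auto

lemma lower:
  assumes cap: "q_maxitive_capacity n q \<mu>"
  shows "D \<le> max_error n N x \<alpha> \<mu>"
proof -
  let ?e = "max_error n N x \<alpha> \<mu>"
  have e: "\<And>k. k \<in> {1..N} \<Longrightarrow> \<bar>sugeno n \<mu> (x k) - \<alpha> k\<bar> \<le> ?e" by (rule err_ge)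
  obtain i where i: "i \<in> {1..N}" "D = delta_i n q N x \<alpha> i" using D_att by blast
  have e0: "0 \<le> ?e" using e[OF i(1)] by linarith
  have qm: "q_maxitive n q \<mu>" and c: "is_capacity n \<mu>" using cap by (auto simp: q_maxitive_capacity_def)
  have m0: "\<mu> {} = 0" using c by (simp add: is_capacity_def)
  obtain A where A: "A = {} \<or> A \<in> small_sets n q" "sugeno n \<mu> (x i) = min (minx (x i) A) (\<mu> A)"
    using sugeno_small[OF qm m0] by blast
  have "\<exists>B \<in> small_sets n q. delta_iA N x \<alpha> i B \<le> ?e"
  proof (cases "A = {}")
    case True
    then have "sugeno n \<mu> (x i) = 0" using A(2) m0 by (simp add: minx_def)
    then have ai: "\<alpha> i \<le> ?e" using e[OF i(1)] by simp
    have 1: "1 \<in> {1..n}" using qn by auto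
    have "delta_iA N x \<alpha> i {1} \<le> ?e"
      unfolding delta_iA_def img_eq
    proof (rule max.boundedI)
      show "pos (\<alpha> i - Min (x i ` {1})) \<le> ?e" using xb[OF i(1) 1] ai e0 by (simp add: pos_def)
      have "sigma_G (\<alpha> i) (Min (x l ` {1})) (\<alpha> l) \<le> ?e" if l: "l \<in> {1..N}" for l
      proof -
        have "0 \<le> \<alpha> l" "0 \<le> \<alpha> i" using ab i(1) l by auto
        then show ?thesis using ai e0
          by (simp add: sigma_G_def pos_def min_def max_def)
      qed
      then show "Max ((\<lambda>l. sigma_G (\<alpha> i) (Min (x l ` {1})) (\<alpha> l)) ` {1..N}) \<le> ?e"
        using N1 by (subst Max_le_iff) auto
    qed
    then show ?thesis using small_sets_ne[OF qn] by blast
  next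
    case False
    then have As: "A \<in> small_sets n q" using A(1) by auto
    then have Ane: "A \<noteq> {}" and Asub: "A \<subseteq> {1..n}" by (auto simp: small_sets_def)
    have S: "sugeno n \<mu> (x i) = min (Min (x i ` A)) (\<mu> A)" using A(2) Ane by (simp add: minx_def)
    have lo: "\<alpha> i - ?e \<le> sugeno n \<mu> (x i)" using e[OF i(1)] by linarith
    have "delta_iA N x \<alpha> i A \<le> ?e"
      unfolding delta_iA_def img_eq
    proof (rule max.boundedI)
      show "pos (\<alpha> i - Min (x i ` A)) \<le> ?e" using S lo e0 by (simp add: pos_def)
      have "sigma_G (\<alpha> i) (Min (x l ` A)) (\<alpha> l) \<le> ?e" if l: "l \<in> {1..N}" for l
      proof -
        have "min (minx (x l) A) (\<mu> A) \<le> sugeno n \<mu> (x l)" using Asub by (rule sugeno_ge)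
        moreover have "sugeno n \<mu> (x l) \<le> \<alpha> l + ?e" using e[of l] l by auto
        ultimately have "min (Min (x l ` A)) (\<mu> A) \<le> \<alpha> l + ?e" using Ane by (simp add: minx_def)
        then show ?thesis using S lo e0
          by (simp add: sigma_G_def pos_def min_def max_def split: if_splits)
      qed
      then show "Max ((\<lambda>l. sigma_G (\<alpha> i) (Min (x l ` A)) (\<alpha> l)) ` {1..N}) \<le> ?e"
        using N1 by (subst Max_le_iff) auto
    qed
    then show ?thesis using As by blast
  qed
  then obtain B where "B \<in> small_sets n q" "delta_iA N x \<alpha> i B \<le> ?e" by blast
  then show ?thesis using i(2) delta_i_le[of B i] by linarith
qed


definition mu0 :: "nat set \<Rightarrow> real" where
  "mu0 Y = (if Y = {} then 0 else eta n q N x \<alpha> Y)"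

definition muc :: "nat set \<Rightarrow> real" where
  "muc X = Max {mu0 Y | Y. Y \<subseteq> X \<and> card Y \<le> q}"

lemma eta_img: "eta n q N x \<alpha> A = Min ((\<lambda>k. godel_imp (Min (x k ` A)) (min (\<alpha> k + D) 1)) ` {1..N})"
  unfolding eta_def img_eq ..

lemma eta_le: "k \<in> {1..N} \<Longrightarrow> eta n q N x \<alpha> A \<le> godel_imp (Min (x k ` A)) (min (\<alpha> k + D) 1)"
  unfolding eta_img by (rule Min_le) auto

lemma eta_att: "\<exists>k \<in> {1..N}. eta n q N x \<alpha> A = godel_imp (Min (x k ` A)) (min (\<alpha> k + D) 1)"
proof -
  have "eta n q N x \<alpha> A \<in> (\<lambda>k. godel_imp (Min (x k ` A)) (min (\<alpha> k + D) 1)) ` {1..N}"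
    unfolding eta_img using N1 by (intro Min_in) auto
  then show ?thesis by auto
qed

lemma eta_bounds: "0 \<le> eta n q N x \<alpha> A \<and> eta n q N x \<alpha> A \<le> 1"
proof -
  obtain k where k: "k \<in> {1..N}" "eta n q N x \<alpha> A = godel_imp (Min (x k ` A)) (min (\<alpha> k + D) 1)"
    using eta_att by blast
  then show ?thesis using ab[OF k(1)] D_nn by (auto simp: godel_imp_def)
qed

lemma godel_anti: "a \<le> a' \<Longrightarrow> b \<le> 1 \<Longrightarrow> godel_imp a' b \<le> godel_imp a b"
  by (auto simp: godel_imp_def)

lemma eta_mono:
  assumes "A \<subseteq> B" "A \<noteq> {}" "finite B"
  shows "eta n q N x \<alpha> A \<le> eta n q N x \<alpha> B"
proof -
  obtain k where k: "k \<in> {1..N}" "eta n q N x \<alpha> B = godel_imp (Min (x k ` B)) (min (\<alpha> k + D) 1)"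
    using eta_att by blast
  have "Min (x k ` B) \<le> Min (x k ` A)" using assms by (intro Min_antimono) auto
  then have "godel_imp (Min (x k ` A)) (min (\<alpha> k + D) 1) \<le> godel_imp (Min (x k ` B)) (min (\<alpha> k + D) 1)"
    by (rule godel_anti) simp
  then show ?thesis using eta_le[OF k(1), of A] k(2) by linarith
qed

lemma mu0_bounds: "0 \<le> mu0 Y \<and> mu0 Y \<le> 1"
  using eta_bounds by (simp add: mu0_def)

lemma mu0_mono: "Y' \<subseteq> Y \<Longrightarrow> finite Y \<Longrightarrow> mu0 Y' \<le> mu0 Y"
  using eta_mono[of Y' Y] eta_bounds[of Y] by (auto simp: mu0_def)

lemma muc_set_fin: "finite X \<Longrightarrow> finite {mu0 Y | Y. Y \<subseteq> X \<and> card Y \<le> q}"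
proof -
  assume "finite X"
  moreover have "{mu0 Y | Y. Y \<subseteq> X \<and> card Y \<le> q} \<subseteq> mu0 ` Pow X" by blast
  ultimately show ?thesis by (meson finite_Pow_iff finite_imageI finite_subset)
qed

lemma muc_set_ne: "mu0 {} \<in> {mu0 Y | Y. Y \<subseteq> X \<and> card Y \<le> q}"
  by (intro CollectI exI[of _ "{}"]) auto

lemma muc_ge: "finite X \<Longrightarrow> Y \<subseteq> X \<Longrightarrow> card Y \<le> q \<Longrightarrow> mu0 Y \<le> muc X"
  unfolding muc_def by (rule Max_ge[OF muc_set_fin]) auto

lemma muc_att: "finite X \<Longrightarrow> \<exists>Y. Y \<subseteq> X \<and> card Y \<le> q \<and> muc X = mu0 Y"
proof -
  assume f: "finite X"
  have "muc X \<in> {mu0 Y | Y. Y \<subseteq> X \<and> card Y \<le> q}"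
    unfolding muc_def using muc_set_fin[OF f] muc_set_ne by (intro Max_in) auto
  then show ?thesis by auto
qed

lemma muc_eq: "finite Y \<Longrightarrow> card Y \<le> q \<Longrightarrow> muc Y = mu0 Y"
proof -
  assume f: "finite Y" and c: "card Y \<le> q"
  obtain Y' where "Y' \<subseteq> Y" "muc Y = mu0 Y'" using muc_att[OF f] by blast
  then show ?thesis using mu0_mono[OF _ f, of Y'] muc_ge[OF f order.refl c] by linarith
qed

lemma muc_cap:
  assumes ex: "\<exists>A. A \<subseteq> {1..n} \<and> card A = q \<and> eta n q N x \<alpha> A = 1"
  shows "q_maxitive_capacity n q muc"
proof -
  have b: "0 \<le> muc A \<and> muc A \<le> 1" if "A \<subseteq> {1..n}" for A
  proof -
    have "finite A" using that finite_subset by blast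
    then obtain Y where "muc A = mu0 Y" using muc_att by blast
    then show ?thesis using mu0_bounds by simp
  qed
  have e: "muc {} = 0" using muc_eq[of "{}"] by (simp add: mu0_def)
  obtain A0 where A0: "A0 \<subseteq> {1..n}" "card A0 = q" "eta n q N x \<alpha> A0 = 1" using ex by blast
  have "A0 \<noteq> {}" using A0(2) qn by auto
  then have "mu0 A0 = 1" using A0(3) by (simp add: mu0_def)
  then have "1 \<le> muc {1..n}" using muc_ge[of "{1..n}" A0] A0 by simp
  then have one: "muc {1..n} = 1" using b[of "{1..n}"] by simp
  have mono: "muc A \<le> muc B" if "A \<subseteq> B" "B \<subseteq> {1..n}" for A B
  proof -
    have fB: "finite B" using that finite_subset by blast
    then have fA: "finite A" using that finite_subset by blast
    obtain Y where "Y \<subseteq> A" "card Y \<le> q" "muc A = mu0 Y" using muc_att[OF fA] by blast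
    then show ?thesis using muc_ge[OF fB, of Y] that by auto
  qed
  have qm: "q_maxitive n q muc"
    unfolding q_maxitive_def
  proof (intro allI impI)
    fix X assume X: "X \<subseteq> {1..n} \<and> q < card X"
    then have fX: "finite X" using finite_subset by blast
    have "{muc Y | Y. Y \<subset> X \<and> card Y \<le> q} = {mu0 Y | Y. Y \<subseteq> X \<and> card Y \<le> q}"
    proof (intro equalityI subsetI)
      fix v assume "v \<in> {muc Y | Y. Y \<subset> X \<and> card Y \<le> q}"
      then obtain Y where Y: "v = muc Y" "Y \<subset> X" "card Y \<le> q" by blast
      then have "finite Y" using fX by (meson finite_subset psubset_imp_subset)
      then show "v \<in> {mu0 Y | Y. Y \<subseteq> X \<and> card Y \<le> q}" using Y muc_eq by auto
    next
      fix v assume "v \<in> {mu0 Y | Y. Y \<subseteq> X \<and> card Y \<le> q}"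
      then obtain Y where Y: "v = mu0 Y" "Y \<subseteq> X" "card Y \<le> q" by blast
      then have "Y \<noteq> X" using X by auto
      then have "Y \<subset> X" using Y by auto
      moreover have "finite Y" using fX Y finite_subset by blast
      ultimately show "v \<in> {muc Y | Y. Y \<subset> X \<and> card Y \<le> q}" using Y muc_eq[of Y]
        by (intro CollectI exI[of _ Y]) auto
    qed
    then show "muc X = Max {muc Y | Y. Y \<subset> X \<and> card Y \<le> q}" by (simp add: muc_def)
  qed
  show ?thesis unfolding q_maxitive_capacity_def is_capacity_def
    using b e one mono qm by blast
qed

lemma upper:
  assumes ex: "\<exists>A. A \<subseteq> {1..n} \<and> card A = q \<and> eta n q N x \<alpha> A = 1"
  shows "max_error n N x \<alpha> muc \<le> D"
proof (rule err_le)
  fix k assume k: "k \<in> {1..N}"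
  have cap: "q_maxitive_capacity n q muc" using muc_cap[OF ex] .
  have qm: "q_maxitive n q muc" and m0: "muc {} = 0" using cap
    by (auto simp: q_maxitive_capacity_def is_capacity_def)
  have up: "sugeno n muc (x k) \<le> \<alpha> k + D"
  proof -
    obtain A where A: "A = {} \<or> A \<in> small_sets n q" "sugeno n muc (x k) = min (minx (x k) A) (muc A)"
      using sugeno_small[OF qm m0] by blast
    show ?thesis
    proof (cases "A = {}")
      case True
      then show ?thesis using A(2) m0 D_nn ab[OF k] by (simp add: minx_def)
    next
      case False
      then have As: "A \<in> small_sets n q" using A(1) by auto
      then have "finite A" "card A \<le> q" by (auto simp: small_sets_def intro: finite_subset)
      then have "muc A = eta n q N x \<alpha> A" using False muc_eq by (simp add: mu0_def)
      then have "muc A \<le> godel_imp (Min (x k ` A)) (min (\<alpha> k + D) 1)" using eta_le[OF k] by simp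
      then show ?thesis using A(2) False by (auto simp: minx_def godel_imp_def split: if_splits)
    qed
  qed
  have lo: "\<alpha> k - D \<le> sugeno n muc (x k)"
  proof -
    obtain A where A: "A \<in> small_sets n q" "delta_i n q N x \<alpha> k = delta_iA N x \<alpha> k A"
      using delta_i_att by blast
    have dD: "delta_iA N x \<alpha> k A \<le> D" using A(2) D_ge[OF k] by simp
    have Ane: "A \<noteq> {}" and Asub: "A \<subseteq> {1..n}" and fA: "finite A" and cA: "card A \<le> q"
      using A(1) by (auto simp: small_sets_def intro: finite_subset)
    have muA: "muc A = eta n q N x \<alpha> A" using Ane fA cA muc_eq by (simp add: mu0_def)
    have m1: "\<alpha> k - D \<le> Min (x k ` A)" using delta_iA_ge2[of k A] dD by (simp add: pos_def)
    obtain l where l: "l \<in> {1..N}" "eta n q N x \<alpha> A = godel_imp (Min (x l ` A)) (min (\<alpha> l + D) 1)"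
      using eta_att by blast
    have sg: "sigma_G (\<alpha> k) (Min (x l ` A)) (\<alpha> l) \<le> D" using delta_iA_ge[OF l(1), of k A] dD by simp
    have m2: "\<alpha> k - D \<le> muc A"
      using muA l(2) sg ab[OF k] ab[OF l(1)] D_nn
      by (simp add: godel_imp_def sigma_G_def pos_def min_def max_def split: if_splits)
    have "min (minx (x k) A) (muc A) \<le> sugeno n muc (x k)" using Asub by (rule sugeno_ge)
    then show ?thesis using m1 m2 Ane by (simp add: minx_def)
  qed
  show "\<bar>sugeno n muc (x k) - \<alpha> k\<bar> \<le> D" using up lo by linarith
qed

end


theorem theorem4:
  fixes n N q :: nat and x :: "nat \<Rightarrow> nat \<Rightarrow> real" and \<alpha> :: "nat \<Rightarrow> real"
  assumes "N \<ge> 1"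
    and "\<And>k i. k \<in> {1..N} \<Longrightarrow> i \<in> {1..n} \<Longrightarrow> 0 \<le> x k i \<and> x k i \<le> 1"
    and "\<And>k. k \<in> {1..N} \<Longrightarrow> 0 \<le> \<alpha> k \<and> \<alpha> k \<le> 1"
    and "q \<in> {1..n}"
    and "\<exists>A. A \<subseteq> {1..n} \<and> card A = q \<and> eta n q N x \<alpha> A = 1"
  shows "(\<exists>\<mu>. q_maxitive_capacity n q \<mu> \<and> max_error n N x \<alpha> \<mu> = Delta n q N x \<alpha>) \<and>
         (\<forall>\<mu>. q_maxitive_capacity n q \<mu> \<longrightarrow> Delta n q N x \<alpha> \<le> max_error n N x \<alpha> \<mu>)"
proof -
  interpret S: setting n N q x \<alpha> using assms(1-4) by unfold_locales auto
  have c: "q_maxitive_capacity n q S.muc" by (rule S.muc_cap[OF assms(5)])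
  have "max_error n N x \<alpha> S.muc = Delta n q N x \<alpha>"
    using S.upper[OF assms(5)] S.lower[OF c] by linarith
  then show ?thesis using c S.lower by blast
qed

end
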